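(* Let $r>0$, $\varepsilon\in(0,1)$, $n\geq 1$ an integer, and $T\subset rB_2^d$ with $|T|\geq(\frac{2}{\varepsilon}+1)^n$. Then there exist vectors $t_k,s_k\in T$ and $u_k,v_k\in\mathbb{R}^d$, $k=1,\dots,n$, such that for every $k$, $0\neq t_k-s_k=u_k+v_k$ and $|v_k|\leq\varepsilon r$, and the vectors $u_1,\dots,u_n$ are pairwise orthogonal.
   Context: $B_2^d$ is the Euclidean unit ball in $\mathbb{R}^d$, $|\cdot|$ the Euclidean norm, $|T|$ the cardinality of $T$. *)

theory Defs
  imports "HOL-Analysis.Analysis"
begin

end

theory Submission imports Defs begin

lemma emeasure_affine_pre:
  fixes c :: "'a::euclidean_space \<Rightarrow> real" and t :: 'a
  assumes c: "\<And>j. j \<in> Basis \<Longrightarrow> c j \<noteq> 0" and A: "A \<in> sets borel"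
  shows "emeasure lborel A = (\<Prod>j\<in>Basis. ennreal \<bar>c j\<bar>) *
     emeasure lborel ((\<lambda>x. t + (\<Sum>j\<in>Basis. (c j * (x \<bullet> j)) *\<^sub>R j)) -` A)"
proof -
  let ?T = "\<lambda>x. t + (\<Sum>j\<in>Basis. (c j * (x \<bullet> j)) *\<^sub>R j)"
  have eq: "lborel = density (distr lborel borel ?T) (\<lambda>_. (\<Prod>j\<in>Basis. \<bar>c j\<bar>))"
    by (rule lborel_affine_euclidean) (rule c)
  have [measurable]: "?T \<in> borel \<rightarrow>\<^sub>M borel" by measurable
  have "emeasure lborel A = emeasure (density (distr lborel borel ?T) (\<lambda>_. (\<Prod>j\<in>Basis. \<bar>c j\<bar>))) A"
    using arg_cong[where f="\<lambda>M. emeasure M A", OF eq] .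
  also have "\<dots> = (\<Prod>j\<in>Basis. ennreal \<bar>c j\<bar>) * emeasure lborel (?T -` A)"
    using A by (simp add: emeasure_density emeasure_distr nn_integral_cmult prod_ennreal
       prod_nonneg)
  finally show ?thesis .
qed

lemma open_pos:
  fixes Z :: "'a::euclidean_space set"
  assumes "open Z" "Z \<noteq> {}" shows "emeasure lborel Z > 0"
proof -
  have "\<not> negligible Z" using open_not_negligible assms by blast
  then have "Z \<notin> null_sets lebesgue"
    using assms by (simp add: negligible_iff_null_sets borel_open)
  then have "Z \<notin> null_sets lborel"
    using null_sets_completionI by blast
  then show ?thesis using assms
    by (simp add: borel_open null_sets_def zero_less_iff_neq_zero)
qed


lemma emeasure_translate:
  fixes t :: "'a::euclidean_space"
  assumes A: "A \<in> sets borel"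
  shows "emeasure lborel A = emeasure lborel ((\<lambda>x. t + x) -` A)"
proof -
  have "emeasure lborel A = emeasure (distr lborel borel ((+) t)) A"
    by (simp only: lborel_distr_plus)
  also have "\<dots> = emeasure lborel ((+) t -` A \<inter> space lborel)"
    by (rule emeasure_distr) (simp_all add: A)
  finally show ?thesis by simp
qed

lemma proj_span:
  fixes B :: "'a::euclidean_space set"
  assumes B: "B \<subseteq> Basis" and y: "y \<in> span B"
  shows "(\<Sum>b\<in>B. (y \<bullet> b) *\<^sub>R b) = y"
proof -
  have fin: "finite B" using B finite_Basis finite_subset by blast
  have z: "y \<bullet> b = 0" if "b \<in> Basis - B" for b
  proof -
    have "subspace {x. orthogonal b x}" by (rule subspace_orthogonal_to_vector)
    moreover have "orthogonal b x" if "x \<in> B" for x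
      using that \<open>b \<in> Basis - B\<close> B unfolding orthogonal_def
      by (metis DiffE inner_not_same_Basis subsetD)
    ultimately have "y \<in> {x. orthogonal b x}"
      using y by (metis mem_Collect_eq span_induct)
    then show ?thesis by (simp add: orthogonal_def inner_commute)
  qed
  have "y = (\<Sum>b\<in>Basis. (y \<bullet> b) *\<^sub>R b)" by (simp add: euclidean_representation)
  also have "\<dots> = (\<Sum>b\<in>B. (y \<bullet> b) *\<^sub>R b) + (\<Sum>b\<in>Basis - B. (y \<bullet> b) *\<^sub>R b)"
    by (metis sum.subset_diff[OF B finite_Basis] add.commute)
  also have "(\<Sum>b\<in>Basis - B. (y \<bullet> b) *\<^sub>R b) = 0" using z by simp
  finally show ?thesis by simp
qed

lemma pack_coord:
  fixes S B :: "'a::euclidean_space set"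
  assumes B: "B \<subseteq> Basis" and finS: "finite S" and Ssp: "S \<subseteq> span B"
    and Sb: "S \<subseteq> cball 0 r" and e: "\<epsilon> > 0" and r: "r > 0"
    and sep: "\<And>y z. y \<in> S \<Longrightarrow> z \<in> S \<Longrightarrow> y \<noteq> z \<Longrightarrow> dist y z > \<epsilon> * r"
  shows "real (card S) \<le> (2 / \<epsilon> + 1) ^ card B"
proof -
  define P where "P x = (\<Sum>b\<in>B. (x \<bullet> b) *\<^sub>R b)" for x :: 'a
  have finB: "finite B" using B finite_Basis finite_subset by blast
  have Padd: "P (x + y) = P x + P y" for x y
    unfolding P_def by (simp add: inner_add_left scaleR_add_left sum.distrib)
  have Pdiff: "P (x - y) = P x - P y" for x y
    unfolding P_def by (simp add: inner_diff_left scaleR_diff_left sum_subtractf)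
  have Pscale: "P (c *\<^sub>R x) = c *\<^sub>R P x" for c x
    unfolding P_def by (simp add: scaleR_sum_right)
  have Pspan: "P x \<in> span B" for x
    unfolding P_def by (simp add: span_base span_scale span_sum)
  have Pid: "y \<in> span B \<Longrightarrow> P y = y" for y
    unfolding P_def using proj_span[OF B] by blast
  have PP: "P (P x) = P x" for x using Pid Pspan by blast
  define \<rho> where "\<rho> = \<epsilon> * r / 2"
  have rho: "\<rho> > 0" using e r by (simp add: \<rho>_def)
  define \<kappa> where "\<kappa> = (r + \<rho>) / \<rho>"
  have kap: "\<kappa> > 0" using rho r by (simp add: \<kappa>_def)
  have kap2: "\<kappa> = 2 / \<epsilon> + 1" using e r by (simp add: \<kappa>_def \<rho>_def field_simps)
  define Z0 where "Z0 = {x. norm (P x) < \<rho> \<and> norm (x - P x) < \<rho>}"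
  define Zy where "Zy y = {x. norm (P x - y) < \<rho> \<and> norm (x - P x) < \<rho>}" for y
  define Zb where "Zb = {x. norm (P x) < r + \<rho> \<and> norm (x - P x) < \<rho>}"
  have openZ0: "open Z0" unfolding Z0_def P_def
    by (intro open_Collect_conj open_Collect_less continuous_intros)
  have openZy: "open (Zy y)" for y unfolding Zy_def P_def
    by (intro open_Collect_conj open_Collect_less continuous_intros)
  have openZb: "open Zb" unfolding Zb_def P_def
    by (intro open_Collect_conj open_Collect_less continuous_intros)
  have "0 \<in> Z0" using rho unfolding Z0_def P_def by simp
  then have pos: "emeasure lborel Z0 > 0" using open_pos[OF openZ0] by blast
  have "bounded Z0"
  proof -
    have "Z0 \<subseteq> cball 0 (2 * \<rho>)"
    proof
      fix x assume "x \<in> Z0"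
      then have "norm (P x) < \<rho>" "norm (x - P x) < \<rho>" by (auto simp: Z0_def)
      moreover have "norm x \<le> norm (P x) + norm (x - P x)"
        using norm_triangle_ineq[of "P x" "x - P x"] by simp
      ultimately show "x \<in> cball 0 (2 * \<rho>)" by simp
    qed
    then show ?thesis using bounded_cball bounded_subset by blast
  qed
  then have fin0: "emeasure lborel Z0 < \<infinity>" by (rule emeasure_bounded_finite)
  have eqy: "emeasure lborel (Zy y) = emeasure lborel Z0" if "y \<in> S" for y
  proof -
    have yP: "P y = y" using Pid Ssp that by blast
    have e1: "emeasure lborel (Zy y) = emeasure lborel ((\<lambda>x. y + x) -` Zy y)"
      by (rule emeasure_translate) (rule borel_open[OF openZy])
    have e2: "(\<lambda>x. y + x) -` Zy y = Z0"
    proof (rule set_eqI)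
      fix x
      have "P (y + x) - y = P x" using Padd[of y x] yP by simp
      moreover have "y + x - P (y + x) = x - P x" using Padd[of y x] yP by simp
      ultimately show "x \<in> (\<lambda>x. y + x) -` Zy y \<longleftrightarrow> x \<in> Z0"
        unfolding Zy_def Z0_def vimage_def mem_Collect_eq by (simp only:)
    qed
    show ?thesis using e1 unfolding e2 .
  qed
  have eqb: "emeasure lborel Zb = ennreal \<kappa> ^ card B * emeasure lborel Z0"
  proof -
    define c where "c j = (if j \<in> B then \<kappa> else 1)" for j :: 'a
    have key: "(\<Sum>j\<in>Basis. (c j * (x \<bullet> j)) *\<^sub>R j) = \<kappa> *\<^sub>R P x + (x - P x)" for x
    proof -
      have h: "x = (\<Sum>b\<in>Basis - B. (x \<bullet> b) *\<^sub>R b) + P x"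
      proof -
        have "x = (\<Sum>b\<in>Basis. (x \<bullet> b) *\<^sub>R b)" by (simp add: euclidean_representation)
        also have "\<dots> = (\<Sum>b\<in>Basis - B. (x \<bullet> b) *\<^sub>R b) + P x"
          unfolding P_def by (rule sum.subset_diff[OF B finite_Basis])
        finally show ?thesis .
      qed
      have h2: "(\<Sum>b\<in>Basis - B. (x \<bullet> b) *\<^sub>R b) = x - P x"
        using arg_cong[where f="\<lambda>z. z - P x", OF h] by simp
      have "(\<Sum>j\<in>Basis. (c j * (x \<bullet> j)) *\<^sub>R j) = (\<Sum>j\<in>Basis - B. (c j * (x \<bullet> j)) *\<^sub>R j)
          + (\<Sum>j\<in>B. (c j * (x \<bullet> j)) *\<^sub>R j)"
        by (rule sum.subset_diff[OF B finite_Basis])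
      also have "(\<Sum>j\<in>B. (c j * (x \<bullet> j)) *\<^sub>R j) = \<kappa> *\<^sub>R P x"
        unfolding P_def c_def by (simp add: scaleR_sum_right)
      also have "(\<Sum>j\<in>Basis - B. (c j * (x \<bullet> j)) *\<^sub>R j) = (\<Sum>j\<in>Basis - B. (x \<bullet> j) *\<^sub>R j)"
        unfolding c_def by simp
      also have "\<dots> = x - P x" by (rule h2)
      finally show ?thesis by (simp only: add.commute)
    qed
    have cnz: "\<And>j. j \<in> Basis \<Longrightarrow> c j \<noteq> 0" using kap by (simp add: c_def)
    have "emeasure lborel Zb = (\<Prod>j\<in>Basis. ennreal \<bar>c j\<bar>) *
       emeasure lborel ((\<lambda>x. 0 + (\<Sum>j\<in>Basis. (c j * (x \<bullet> j)) *\<^sub>R j)) -` Zb)"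
      by (rule emeasure_affine_pre[where c=c and t=0, OF cnz]) (auto intro: borel_open openZb)
    also have "(\<lambda>x. 0 + (\<Sum>j\<in>Basis. (c j * (x \<bullet> j)) *\<^sub>R j)) -` Zb = Z0"
    proof -
      have "P (\<kappa> *\<^sub>R P x + (x - P x)) = \<kappa> *\<^sub>R P x" for x
        by (simp add: Padd Pdiff Pscale PP)
      moreover have "norm (\<kappa> *\<^sub>R P x) < r + \<rho> \<longleftrightarrow> norm (P x) < \<rho>" for x
      proof -
        have "r + \<rho> = \<kappa> * \<rho>" using rho by (simp add: \<kappa>_def)
        then show ?thesis using kap by simp
      qed
      ultimately show ?thesis unfolding key Zb_def Z0_def by auto
    qed
    also have "(\<Prod>j\<in>Basis. ennreal \<bar>c j\<bar>) = ennreal \<kappa> ^ card B"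
    proof -
      have "(\<Prod>j\<in>Basis. ennreal \<bar>c j\<bar>) = (\<Prod>j\<in>Basis. if j \<in> B then ennreal \<kappa> else 1)"
        using kap by (intro prod.cong) (auto simp: c_def)
      also have "\<dots> = (\<Prod>j\<in>B. ennreal \<kappa>)"
      proof -
        have BB: "B \<inter> Basis = B" "Basis \<inter> B = B" using B by blast+
        show ?thesis
          using prod.If_cases[OF finite_Basis, of "\<lambda>j. j \<in> B" "\<lambda>_. ennreal \<kappa>" "\<lambda>_. 1"]
          by (simp add: BB)
      qed
      finally show ?thesis by simp
    qed
    finally show ?thesis .
  qed
  have disj: "disjoint_family_on Zy S"
    unfolding disjoint_family_on_def
  proof (intro ballI impI)
    fix y z assume yz: "y \<in> S" "z \<in> S" "y \<noteq> z"
    show "Zy y \<inter> Zy z = {}"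
    proof (rule ccontr)
      assume "Zy y \<inter> Zy z \<noteq> {}"
      then obtain x where x: "norm (P x - y) < \<rho>" "norm (P x - z) < \<rho>" by (auto simp: Zy_def)
      have "dist y z \<le> dist y (P x) + dist (P x) z" by (rule dist_triangle)
      also have "dist y (P x) = norm (P x - y)" by (simp add: dist_norm norm_minus_commute)
      also have "dist (P x) z = norm (P x - z)" by (simp add: dist_norm)
      finally have "dist y z < 2 * \<rho>" using x by linarith
      then have "dist y z < \<epsilon> * r" by (simp add: \<rho>_def)
      with sep[OF yz] show False by simp
    qed
  qed
  have sub: "(\<Union>y\<in>S. Zy y) \<subseteq> Zb"
  proof
    fix x assume "x \<in> (\<Union>y\<in>S. Zy y)"
    then obtain y where y: "y \<in> S" "norm (P x - y) < \<rho>" "norm (x - P x) < \<rho>"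
      by (auto simp: Zy_def)
    have "norm y \<le> r" using Sb y(1) by auto
    moreover have "norm (P x) \<le> norm (P x - y) + norm y"
      using norm_triangle_ineq[of "P x - y" y] by simp
    ultimately show "x \<in> Zb" using y by (simp add: Zb_def)
  qed
  have "of_nat (card S) * emeasure lborel Z0 = (\<Sum>y\<in>S. emeasure lborel Z0)"
    by simp
  also have "\<dots> = (\<Sum>y\<in>S. emeasure lborel (Zy y))"
    by (rule sum.cong) (simp_all add: eqy)
  also have "\<dots> = emeasure lborel (\<Union>y\<in>S. Zy y)"
    by (rule sum_emeasure) (auto intro: borel_open openZy disj finS)
  also have "\<dots> \<le> emeasure lborel Zb"
    by (rule emeasure_mono[OF sub]) (auto intro: borel_open openZb)
  also have "\<dots> = ennreal \<kappa> ^ card B * emeasure lborel Z0"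
    by (rule eqb)
  finally have ineq: "of_nat (card S) * emeasure lborel Z0 \<le> ennreal \<kappa> ^ card B * emeasure lborel Z0" .
  define m0 where "m0 = enn2real (emeasure lborel Z0)"
  have m0e: "emeasure lborel Z0 = ennreal m0"
    unfolding m0_def using fin0 by simp
  have m0p: "m0 > 0"
    unfolding m0_def enn2real_positive_iff using fin0 pos by simp
  have A: "ennreal (real (card S) * m0) = of_nat (card S) * emeasure lborel Z0"
    unfolding m0e using m0p by (simp add: ennreal_mult ennreal_of_nat_eq_real_of_nat)
  have B2: "ennreal (\<kappa> ^ card B * m0) = ennreal \<kappa> ^ card B * emeasure lborel Z0"
    unfolding m0e using m0p kap by (simp add: ennreal_mult ennreal_power)
  have "ennreal (real (card S) * m0) \<le> ennreal (\<kappa> ^ card B * m0)"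
    unfolding A B2 by (rule ineq)
  then have "real (card S) * m0 \<le> \<kappa> ^ card B * m0"
    using m0p kap by (simp add: ennreal_le_iff)
  then show ?thesis using m0p kap2 by simp
qed

lemma pack_sub:
  fixes F S :: "'a::euclidean_space set"
  assumes F: "subspace F" and finS: "finite S" and SF: "S \<subseteq> F"
    and Sb: "S \<subseteq> cball 0 r" and e: "\<epsilon> > 0" and r: "r > 0"
    and sep: "\<And>y z. y \<in> S \<Longrightarrow> z \<in> S \<Longrightarrow> y \<noteq> z \<Longrightarrow> dist y z > \<epsilon> * r"
  shows "real (card S) \<le> (2 / \<epsilon> + 1) ^ dim F"
proof -
  have "dim F \<le> card (Basis :: 'a set)"
    using dim_subset[of F UNIV] dim_UNIV by simp
  then obtain B :: "'a set" where B: "B \<subseteq> Basis" "card B = dim F" "finite B"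
    by (rule obtain_subset_with_card_n)
  have indB: "independent B" using independent_Basis B(1) independent_mono by blast
  have dimB: "dim (span B) = dim F" using dim_span_eq_card_independent[OF indB] B(2) by simp
  obtain f where f: "linear f" "f ` F = span B" "\<And>x. x \<in> F \<Longrightarrow> norm (f x) = norm x"
    by (rule isometry_subspaces[OF F subspace_span dimB[symmetric]]) blast
  have fd: "dist (f y) (f z) = dist y z" if "y \<in> F" "z \<in> F" for y z
  proof -
    have "f y - f z = f (y - z)" using f(1) by (simp add: linear_diff)
    moreover have "y - z \<in> F" using F that by (simp add: subspace_diff)
    ultimately show ?thesis using f(3) by (simp add: dist_norm)
  qed
  have inj: "inj_on f S"
  proof (rule inj_onI)
    fix y z assume "y \<in> S" "z \<in> S" "f y = f z"
    then have "dist y z = 0" using fd[of y z] SF by auto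
    then show "y = z" by simp
  qed
  have "real (card (f ` S)) \<le> (2 / \<epsilon> + 1) ^ card B"
  proof (rule pack_coord[OF B(1) _ _ _ e r])
    show "finite (f ` S)" using finS by simp
    show "f ` S \<subseteq> span B" using f(2) SF by blast
    show "f ` S \<subseteq> cball 0 r" using Sb SF f(3) by (auto simp: subset_iff)
    fix y z assume "y \<in> f ` S" "z \<in> f ` S" "y \<noteq> z"
    then obtain y' z' where yz': "y' \<in> S" "z' \<in> S" "y = f y'" "z = f z'" "y' \<noteq> z'" by blast
    have "y' \<in> F" "z' \<in> F" using yz' SF by auto
    then have "dist y z = dist y' z'" using fd yz' by simp
    then show "dist y z > \<epsilon> * r" using sep[OF yz'(1,2,5)] by simp
  qed
  then show ?thesis using card_image[OF inj] B(2) by simp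
qed

lemma induct_main:
  fixes T :: "'a::euclidean_space set" and r \<epsilon> :: real
  assumes finT: "finite T" and Tb: "T \<subseteq> cball 0 r" and e: "\<epsilon> > 0" "\<epsilon> < 1" and r: "r > 0"
    and card: "(2 / \<epsilon> + 1) ^ n \<le> real (card T)"
  shows "k \<le> n \<Longrightarrow> \<exists>t s u v :: nat \<Rightarrow> 'a.
           (\<forall>i\<in>{1..k}. t i \<in> T \<and> s i \<in> T \<and> t i - s i \<noteq> 0 \<and>
                         t i - s i = u i + v i \<and> norm (v i) \<le> \<epsilon> * r) \<and>
           (\<forall>j\<in>{1..k}. \<forall>i\<in>{1..k}. j \<noteq> i \<longrightarrow> inner (u j) (u i) = 0)"
proof (induction k)
  case 0
  then show ?case by simp
next
  case (Suc k)
  then obtain t s u v :: "nat \<Rightarrow> 'a" where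
    IH1: "\<forall>i\<in>{1..k}. t i \<in> T \<and> s i \<in> T \<and> t i - s i \<noteq> 0 \<and>
                         t i - s i = u i + v i \<and> norm (v i) \<le> \<epsilon> * r" and
    IH2: "\<forall>j\<in>{1..k}. \<forall>i\<in>{1..k}. j \<noteq> i \<longrightarrow> inner (u j) (u i) = 0"
    by auto
  define U where "U = u ` {1..k}"
  define F where "F = span U"
  have dimF: "dim F < n"
  proof -
    have "dim F \<le> card U" unfolding F_def U_def by (rule dim_le_card) auto
    also have "card U \<le> k" unfolding U_def using card_image_le[of "{1..k}" u] by simp
    finally show ?thesis using Suc.prems by simp
  qed
  have dec: "\<exists>y. y \<in> F \<and> (\<forall>w\<in>F. orthogonal (x - y) w)" for x
  proof -
    obtain y z where "y \<in> span U" "\<And>w. w \<in> span U \<Longrightarrow> orthogonal z w" "x = y + z"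
      using orthogonal_subspace_decomp_exists[of U x] by blast
    moreover have "x - y = z" using \<open>x = y + z\<close> by simp
    ultimately show ?thesis unfolding F_def by auto
  qed
  define p where "p x = (SOME y. y \<in> F \<and> (\<forall>w\<in>F. orthogonal (x - y) w))" for x
  have pF: "p x \<in> F" and po: "\<And>w. w \<in> F \<Longrightarrow> orthogonal (x - p x) w" for x
    using someI_ex[OF dec[of x]] unfolding p_def by auto
  have pnorm: "norm (p x) \<le> norm x" for x
  proof -
    have "orthogonal (p x) (x - p x)" using po[OF pF[of x], of x]
      by (simp add: orthogonal_commute)
    then have "(norm x)\<^sup>2 = (norm (p x))\<^sup>2 + (norm (x - p x))\<^sup>2"
      using norm_add_Pythagorean[of "p x" "x - p x"] by simp
    then have "(norm (p x))\<^sup>2 \<le> (norm x)\<^sup>2" by simp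
    then show ?thesis using norm_ge_zero power2_le_imp_le by blast
  qed
  have c1: "2 / \<epsilon> + 1 > 1" using e by simp
  have "\<exists>a\<in>T. \<exists>b\<in>T. a \<noteq> b \<and> dist (p a) (p b) \<le> \<epsilon> * r"
  proof (rule ccontr)
    assume "\<not> ?thesis"
    then have sepT: "\<And>a b. a \<in> T \<Longrightarrow> b \<in> T \<Longrightarrow> a \<noteq> b \<Longrightarrow> dist (p a) (p b) > \<epsilon> * r"
      by force
    have inj: "inj_on p T"
    proof (rule inj_onI)
      fix a b assume "a \<in> T" "b \<in> T" "p a = p b"
      then show "a = b" using sepT[of a b] e r by (metis dist_self mult_pos_pos not_less_iff_gr_or_eq)
    qed
    have "real (card (p ` T)) \<le> (2 / \<epsilon> + 1) ^ dim F"
    proof (rule pack_sub[OF _ _ _ _ e(1) r])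
      show "subspace F" unfolding F_def by simp
      show "finite (p ` T)" using finT by simp
      show "p ` T \<subseteq> F" using pF by auto
      show "p ` T \<subseteq> cball 0 r"
      proof
        fix y assume "y \<in> p ` T"
        then obtain a where a: "a \<in> T" "y = p a" by blast
        have "norm a \<le> r" using Tb a(1) by auto
        then show "y \<in> cball 0 r" using pnorm[of a] a(2) by simp
      qed
      fix y z assume "y \<in> p ` T" "z \<in> p ` T" "y \<noteq> z"
      then show "dist y z > \<epsilon> * r" using sepT by auto
    qed
    also have "\<dots> < (2 / \<epsilon> + 1) ^ n" using dimF c1 by (rule power_strict_increasing)
    also have "\<dots> \<le> real (card T)" by (rule card)
    finally show False using card_image[OF inj] by simp
  qed
  then obtain a b where ab: "a \<in> T" "b \<in> T" "a \<noteq> b" "dist (p a) (p b) \<le> \<epsilon> * r" by blast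
  define t' where "t' = t(Suc k := a)"
  define s' where "s' = s(Suc k := b)"
  define u' where "u' = u(Suc k := (a - p a) - (b - p b))"
  define v' where "v' = v(Suc k := p a - p b)"
  have new1: "t' (Suc k) \<in> T \<and> s' (Suc k) \<in> T \<and> t' (Suc k) - s' (Suc k) \<noteq> 0 \<and>
        t' (Suc k) - s' (Suc k) = u' (Suc k) + v' (Suc k) \<and> norm (v' (Suc k)) \<le> \<epsilon> * r"
    using ab by (simp add: t'_def s'_def u'_def v'_def dist_norm)
  have orth: "inner (u' i) (u' (Suc k)) = 0 \<and> inner (u' (Suc k)) (u' i) = 0" if "i \<in> {1..k}" for i
  proof -
    have ui: "u i \<in> F" unfolding F_def U_def using that by (simp add: span_base)
    have "inner (a - p a) (u i) = 0" "inner (b - p b) (u i) = 0"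
      using po[OF ui] by (simp_all add: orthogonal_def)
    then have "inner ((a - p a) - (b - p b)) (u i) = 0" by (simp add: inner_diff_left)
    moreover have "u' i = u i" "u' (Suc k) = (a - p a) - (b - p b)"
      using that by (auto simp: u'_def)
    ultimately show ?thesis by (simp add: inner_commute)
  qed
  have old: "t' i = t i" "s' i = s i" "u' i = u i" "v' i = v i" if "i \<in> {1..k}" for i
    using that by (auto simp: t'_def s'_def u'_def v'_def)
  have split: "{1..Suc k} = insert (Suc k) {1..k}" by auto
  show ?case
  proof (rule exI[of _ t'], rule exI[of _ s'], rule exI[of _ u'], rule exI[of _ v'], rule conjI)
    show "\<forall>i\<in>{1..Suc k}. t' i \<in> T \<and> s' i \<in> T \<and> t' i - s' i \<noteq> 0 \<and>
                         t' i - s' i = u' i + v' i \<and> norm (v' i) \<le> \<epsilon> * r"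
      unfolding split using new1 IH1 old by auto
    show "\<forall>j\<in>{1..Suc k}. \<forall>i\<in>{1..Suc k}. j \<noteq> i \<longrightarrow> inner (u' j) (u' i) = 0"
      unfolding split using IH2 old orth by auto
  qed
qed

theorem lemma3p5:
  fixes r \<epsilon> :: real and n :: nat and T :: "'a::euclidean_space set"
  assumes "r > 0" and "0 < \<epsilon>" and "\<epsilon> < 1" and "n \<ge> 1"
    and "T \<subseteq> cball 0 r"
    and "infinite T \<or> real (card T) \<ge> (2 / \<epsilon> + 1) ^ n"
  shows "\<exists>t s u v :: nat \<Rightarrow> 'a.
           (\<forall>k\<in>{1..n}. t k \<in> T \<and> s k \<in> T \<and> t k - s k \<noteq> 0 \<and>
                         t k - s k = u k + v k \<and> norm (v k) \<le> \<epsilon> * r) \<and>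
           (\<forall>j\<in>{1..n}. \<forall>k\<in>{1..n}. j \<noteq> k \<longrightarrow> inner (u j) (u k) = 0)"
proof -
  obtain T' where T': "finite T'" "T' \<subseteq> T" "(2 / \<epsilon> + 1) ^ n \<le> real (card T')"
  proof (cases "finite T")
    case True
    then show ?thesis using that assms(6) by blast
  next
    case False
    obtain B where "finite B" "card B = nat \<lceil>(2 / \<epsilon> + 1) ^ n\<rceil>" "B \<subseteq> T"
      using infinite_arbitrarily_large[OF False] by blast
    moreover have "(2 / \<epsilon> + 1) ^ n \<le> real (nat \<lceil>(2 / \<epsilon> + 1) ^ n\<rceil>)"
      by (rule real_nat_ceiling_ge)
    ultimately show ?thesis using that by metis
  qed
  have T'b: "T' \<subseteq> cball 0 r" using T'(2) assms(5) by blast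
  obtain t s u v :: "nat \<Rightarrow> 'a" where
    H1: "\<forall>i\<in>{1..n}. t i \<in> T' \<and> s i \<in> T' \<and> t i - s i \<noteq> 0 \<and>
                         t i - s i = u i + v i \<and> norm (v i) \<le> \<epsilon> * r" and
    H2: "\<forall>j\<in>{1..n}. \<forall>i\<in>{1..n}. j \<noteq> i \<longrightarrow> inner (u j) (u i) = 0"
    using induct_main[OF T'(1) T'b assms(2) assms(3) assms(1) T'(3), of n] by blast
  show ?thesis
    using H1 H2 T'(2) by blast
qed

end
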